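(* Let $\pi:L_{\mathcal F}\to L_{\mathcal G}$ satisfy (REG). Suppose $L^*_{\mathcal F}\hookrightarrow L^1_{\mathcal F}$ is a Banach lattice with the property: for any sequence $(\eta_n)_n\subseteq(L^*_{\mathcal F})_+$ with $\eta_n\eta_m=0$ for all $n\neq m$, there exists a sequence $(\alpha_n)_n\subseteq(0,+\infty)$ such that $\sum_n\alpha_n\eta_n\in(L^*_{\mathcal F})_+$. Let $X\in L_{\mathcal F}$ with $H(X)>-\infty$ $\mathbb P$-a.s. Then for every $\varepsilon>0$ there exists $Q_\varepsilon\in L^*_{\mathcal F}\cap\mathcal P$ such that $H(X)-K(X,Q_\varepsilon)<\varepsilon$.
   Context: Let $(\Omega,\mathcal F,\mathbb P)$ be a probability space, $\mathcal G\subseteq\mathcal F$ a sub-$\sigma$-algebra. (In)equalities hold $\mathbb P$-a.s. unless a measure is indicated ($\ge_Q$: $Q$-a.s.); $\sup,\inf$ are $\mathbb P$-essential. $L_{\mathcal F}\subseteq L^0(\Omega,\mathcal F,\mathbb P)$, $L_{\mathcal G}\subseteq L^0(\Omega,\mathcal G,\mathbb P)$ are vector lattices closed under multiplication by indicators of $\mathcal F$- (resp. $\mathcal G$-) measurable sets; the order continuous dual $L^*_{\mathcal F}$ of $(L_{\mathcal F},\ge)$ is a lattice contained in $L^1_{\mathcal F}=L^1(\Omega,\mathcal F,\mathbb P)$ (functionals $X\mapsto E_{\mathbb P}[ZX]$), closed under multiplication by indicators of sets in $\mathcal F$. $\mathcal P=\{\xi'\in L^1_{\mathcal F}:\xi'\ge0,E_{\mathbb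 P}[\xi']=1\}$, identified with probabilities $Q\ll\mathbb P$. (REG): $\pi(X\mathbf 1_A+Y\mathbf 1_{A^c})=\pi(X)\mathbf 1_A+\pi(Y)\mathbf 1_{A^c}$ for $A\in\mathcal G$. $K(X,Q):=\inf_{\xi\in L_{\mathcal F}}\{\pi(\xi)\mid E_Q[\xi\mid\mathcal G]\ge_Q E_Q[X\mid\mathcal G]\}$ and $H(X):=\sup_{Q\in L^*_{\mathcal F}\cap\mathcal P}K(X,Q)$. *)

theory Defs
  imports "HOL-Probability.Probability"
begin

text \<open>Random variables are represented by functions; the paper's equivalence classes
  are modelled by sets of functions that are saturated under P-a.s. equality.\<close>

definition ae_saturated :: "'a measure \<Rightarrow> 'a measure \<Rightarrow> ('a \<Rightarrow> real) set \<Rightarrow> bool" where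
  "ae_saturated M N S \<longleftrightarrow> S \<subseteq> borel_measurable N \<and>
     (\<forall>X\<in>S. \<forall>Y\<in>borel_measurable N. (AE \<omega> in M. X \<omega> = Y \<omega>) \<longrightarrow> Y \<in> S)"

definition vector_lattice_fun :: "('a \<Rightarrow> real) set \<Rightarrow> bool" where
  "vector_lattice_fun S \<longleftrightarrow> (\<lambda>\<omega>. 0) \<in> S \<and>
     (\<forall>X\<in>S. \<forall>Y\<in>S. (\<lambda>\<omega>. X \<omega> + Y \<omega>) \<in> S) \<and>
     (\<forall>X\<in>S. \<forall>c::real. (\<lambda>\<omega>. c * X \<omega>) \<in> S) \<and>
     (\<forall>X\<in>S. \<forall>Y\<in>S. (\<lambda>\<omega>. max (X \<omega>) (Y \<omega>)) \<in> S)"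

definition indicator_closed :: "'a measure \<Rightarrow> ('a \<Rightarrow> real) set \<Rightarrow> bool" where
  "indicator_closed N S \<longleftrightarrow> (\<forall>X\<in>S. \<forall>A\<in>sets N. (\<lambda>\<omega>. indicator A \<omega> * X \<omega>) \<in> S)"

definition banach_lattice_in_L1 :: "'a measure \<Rightarrow> ('a \<Rightarrow> real) set \<Rightarrow> (('a \<Rightarrow> real) \<Rightarrow> real) \<Rightarrow> bool" where
  "banach_lattice_in_L1 M S N \<longleftrightarrow>
     (\<forall>x\<in>S. N x \<ge> 0 \<and> (N x = 0 \<longleftrightarrow> (AE \<omega> in M. x \<omega> = 0))) \<and>
     (\<forall>x\<in>S. \<forall>y\<in>S. N (\<lambda>\<omega>. x \<omega> + y \<omega>) \<le> N x + N y) \<and>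
     (\<forall>x\<in>S. \<forall>c::real. N (\<lambda>\<omega>. c * x \<omega>) = \<bar>c\<bar> * N x) \<and>
     (\<forall>x\<in>S. \<forall>y\<in>S. (AE \<omega> in M. \<bar>x \<omega>\<bar> \<le> \<bar>y \<omega>\<bar>) \<longrightarrow> N x \<le> N y) \<and>
     (\<forall>s::nat \<Rightarrow> 'a \<Rightarrow> real. (\<forall>n. s n \<in> S) \<and>
        (\<forall>e>0. \<exists>m. \<forall>n\<ge>m. \<forall>k\<ge>m. N (\<lambda>\<omega>. s n \<omega> - s k \<omega>) < e)
        \<longrightarrow> (\<exists>x\<in>S. (\<lambda>n. N (\<lambda>\<omega>. s n \<omega> - x \<omega>)) \<longlonglongrightarrow> 0)) \<and>
     (\<exists>C. \<forall>x\<in>S. (\<integral>\<omega>. \<bar>x \<omega>\<bar> \<partial>M) \<le> C * N x)"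

text \<open>Densities of probability measures Q << P.\<close>
definition prob_densities :: "'a measure \<Rightarrow> ('a \<Rightarrow> real) set" where
  "prob_densities M = {q. integrable M q \<and> (AE \<omega> in M. q \<omega> \<ge> 0) \<and> (\<integral>\<omega>. q \<omega> \<partial>M) = 1}"

definition dens_measure :: "'a measure \<Rightarrow> ('a \<Rightarrow> real) \<Rightarrow> 'a measure" where
  "dens_measure M q = density M (\<lambda>\<omega>. ennreal (q \<omega>))"

definition is_ess_inf_fam :: "'a measure \<Rightarrow> ('a \<Rightarrow> ereal) set \<Rightarrow> ('a \<Rightarrow> ereal) \<Rightarrow> bool" where
  "is_ess_inf_fam M S g \<longleftrightarrow> g \<in> borel_measurable M \<and>
     (\<forall>f\<in>S. AE \<omega> in M. g \<omega> \<le> f \<omega>) \<and>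
     (\<forall>h\<in>borel_measurable M. (\<forall>f\<in>S. AE \<omega> in M. h \<omega> \<le> f \<omega>) \<longrightarrow> (AE \<omega> in M. h \<omega> \<le> g \<omega>))"

definition is_ess_sup_fam :: "'a measure \<Rightarrow> ('a \<Rightarrow> ereal) set \<Rightarrow> ('a \<Rightarrow> ereal) \<Rightarrow> bool" where
  "is_ess_sup_fam M S g \<longleftrightarrow> g \<in> borel_measurable M \<and>
     (\<forall>f\<in>S. AE \<omega> in M. f \<omega> \<le> g \<omega>) \<and>
     (\<forall>h\<in>borel_measurable M. (\<forall>f\<in>S. AE \<omega> in M. f \<omega> \<le> h \<omega>) \<longrightarrow> (AE \<omega> in M. g \<omega> \<le> h \<omega>))"

definition ess_inf_fam :: "'a measure \<Rightarrow> ('a \<Rightarrow> ereal) set \<Rightarrow> ('a \<Rightarrow> ereal)" where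
  "ess_inf_fam M S = (SOME g. is_ess_inf_fam M S g)"

definition ess_sup_fam :: "'a measure \<Rightarrow> ('a \<Rightarrow> ereal) set \<Rightarrow> ('a \<Rightarrow> ereal)" where
  "ess_sup_fam M S = (SOME g. is_ess_sup_fam M S g)"

definition Kfun :: "'a measure \<Rightarrow> 'a measure \<Rightarrow> ('a \<Rightarrow> real) set \<Rightarrow> (('a \<Rightarrow> real) \<Rightarrow> ('a \<Rightarrow> real))
    \<Rightarrow> ('a \<Rightarrow> real) \<Rightarrow> ('a \<Rightarrow> real) \<Rightarrow> ('a \<Rightarrow> ereal)" where
  "Kfun M G LF \<pi>F X q = ess_inf_fam M
     {(\<lambda>\<omega>. ereal (\<pi>F \<xi> \<omega>)) | \<xi>. \<xi> \<in> LF \<and>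
        (AE \<omega> in dens_measure M q.
           real_cond_exp (dens_measure M q) G \<xi> \<omega> \<ge> real_cond_exp (dens_measure M q) G X \<omega>)}"

definition Hfun :: "'a measure \<Rightarrow> 'a measure \<Rightarrow> ('a \<Rightarrow> real) set \<Rightarrow> ('a \<Rightarrow> real) set
    \<Rightarrow> (('a \<Rightarrow> real) \<Rightarrow> ('a \<Rightarrow> real)) \<Rightarrow> ('a \<Rightarrow> real) \<Rightarrow> ('a \<Rightarrow> ereal)" where
  "Hfun M G LF Lstar \<pi>F X = ess_sup_fam M
     {Kfun M G LF \<pi>F X q | q. q \<in> Lstar \<inter> prob_densities M}"

end

theory Submission
  imports Defs
begin

definition phi :: "ereal \<Rightarrow> real" where
  "phi x = (if x = \<infinity> then pi/2 else if x = -\<infinity> then -(pi/2) else arctan (real_of_ereal x))"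

lemma phi_strict: "x < y \<Longrightarrow> phi x < phi y"
  using arctan_bounded
  by (cases x; cases y) (auto simp: phi_def arctan_less_iff)

lemma phi_mono: "x \<le> y \<Longrightarrow> phi x \<le> phi y"
  using phi_strict by (cases "x = y") (auto simp: order_le_less)

lemma phi_bound: "\<bar>phi x\<bar> \<le> pi/2"
  using arctan_bounded[of "real_of_ereal x"] by (auto simp: phi_def)

lemma phi_lower: "-(pi/2) \<le> phi x"
  using phi_bound[of x] by (simp add: abs_le_iff)

lemma phi_meas[measurable]:
  assumes [measurable]: "g \<in> borel_measurable M" shows "(\<lambda>\<omega>. phi (g \<omega>)) \<in> borel_measurable M"
  unfolding phi_def by measurable

lemma ess_inf_seq:
  fixes S :: "('a \<Rightarrow> ereal) set"
  assumes P: "prob_space M" and Sm: "S \<subseteq> borel_measurable M" and Sne: "S \<noteq> {}"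
  shows "\<exists>f::nat \<Rightarrow> 'a \<Rightarrow> ereal. (\<forall>n. f n \<in> S) \<and> (\<forall>s\<in>S. AE \<omega> in M. (INF n. f n \<omega>) \<le> s \<omega>)"
proof -
  interpret prob_space M by fact
  define v where "v f = (\<integral>\<omega>. phi (INF n. f n \<omega>) \<partial>M)" for f :: "nat \<Rightarrow> 'a \<Rightarrow> ereal"
  have meas: "(\<lambda>\<omega>. phi (INF n. f n \<omega>)) \<in> borel_measurable M" if "\<forall>n. f n \<in> S" for f :: "nat \<Rightarrow> 'a \<Rightarrow> ereal"
  proof -
    have "f n \<in> borel_measurable M" for n using that Sm by auto
    then have "(\<lambda>\<omega>. (INF n. f n \<omega>)) \<in> borel_measurable M" by (intro borel_measurable_INF) auto
    then show ?thesis by (rule phi_meas)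
  qed
  have intg: "integrable M (\<lambda>\<omega>. phi (INF n. f n \<omega>))" if "\<forall>n. f n \<in> S" for f :: "nat \<Rightarrow> 'a \<Rightarrow> ereal"
    by (rule integrable_const_bound[where B="pi/2"]) (use phi_bound meas[OF that] in auto)
  have vlow: "v f \<ge> -(pi/2)" if "\<forall>n. f n \<in> S" for f :: "nat \<Rightarrow> 'a \<Rightarrow> ereal"
  proof -
    have "(\<integral>\<omega>. -(pi/2) \<partial>M) \<le> v f" unfolding v_def
      by (rule integral_mono[OF _ intg[OF that]]) (use phi_bound in \<open>auto simp: abs_le_iff intro: phi_lower\<close>)
    then show ?thesis by (simp add: prob_space)
  qed
  define V where "V = v ` {f. \<forall>n. f n \<in> S}"
  obtain s0 where s0: "s0 \<in> S" using Sne by auto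
  have Vne: "V \<noteq> {}" unfolding V_def using s0 by (auto intro: exI[of _ "\<lambda>_. s0"])
  have Vbdd: "bdd_below V" unfolding V_def using vlow by (auto intro!: bdd_belowI[of _ "-(pi/2)"])
  define m where "m = Inf V"
  have "\<exists>f. (\<forall>n. f n \<in> S) \<and> v f < m + 1 / real (Suc k)" for k
  proof -
    have "Inf V < m + 1 / real (Suc k)" unfolding m_def by simp
    from cInf_lessD[OF Vne this] show ?thesis unfolding V_def by auto
  qed
  then obtain ff where ff: "\<And>k n. ff k n \<in> S" "\<And>k. v (ff k) < m + 1 / real (Suc k)"
    by metis
  define F where "F n = ff (fst (prod_decode n)) (snd (prod_decode n))" for n
  have FS: "\<forall>n. F n \<in> S" unfolding F_def using ff by auto
  have Fle: "(INF n. F n \<omega>) \<le> (INF j. ff k j \<omega>)" for k \<omega>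
  proof (rule INF_greatest)
    fix j
    have "F (prod_encode (k, j)) = ff k j" unfolding F_def by simp
    then show "(INF n. F n \<omega>) \<le> ff k j \<omega>" by (metis INF_lower UNIV_I)
  qed
  have vFk: "v F \<le> v (ff k)" for k
    unfolding v_def
    by (rule integral_mono[OF intg[OF FS] intg]) (use ff Fle phi_mono in auto)
  have mle: "m \<le> v f" if "\<forall>n. f n \<in> S" for f :: "nat \<Rightarrow> 'a \<Rightarrow> ereal"
    unfolding m_def using that Vbdd by (auto intro!: cInf_lower simp: V_def)
  have vF: "v F = m"
  proof (rule antisym)
    show "m \<le> v F" using mle FS .
    show "v F \<le> m"
    proof (rule ccontr)
      assume "\<not> v F \<le> m"
      then have "0 < v F - m" by simp
      then obtain k where "inverse (real (Suc k)) < v F - m" using reals_Archimedean by blast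
      moreover have "v F < m + 1 / real (Suc k)" using vFk[of k] ff(2)[of k] by linarith
      ultimately show False by (simp add: inverse_eq_divide)
    qed
  qed
  have "AE \<omega> in M. (INF n. F n \<omega>) \<le> s \<omega>" if s: "s \<in> S" for s
  proof -
    define F' where "F' = case_nat s F"
    have F'S: "\<forall>n. F' n \<in> S" unfolding F'_def using s FS by (auto split: nat.split)
    have le1: "(INF n. F' n \<omega>) \<le> (INF n. F n \<omega>)" for \<omega>
    proof (rule INF_greatest)
      fix n show "(INF n. F' n \<omega>) \<le> F n \<omega>"
        using INF_lower[of "Suc n" UNIV "\<lambda>n. F' n \<omega>"] by (simp add: F'_def)
    qed
    have le2: "(INF n. F' n \<omega>) \<le> s \<omega>" for \<omega>
      using INF_lower[of 0 UNIV "\<lambda>n. F' n \<omega>"] by (simp add: F'_def)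
    have "v F' \<le> v F" unfolding v_def
      by (rule integral_mono[OF intg[OF F'S] intg[OF FS]]) (use le1 phi_mono in auto)
    moreover have "m \<le> v F'" using mle F'S by auto
    ultimately have "v F - v F' = 0" using vF by simp
    then have "(\<integral>\<omega>. phi (INF n. F n \<omega>) - phi (INF n. F' n \<omega>) \<partial>M) = 0"
      unfolding v_def using intg[OF FS] intg[OF F'S] by simp
    then have "AE \<omega> in M. phi (INF n. F n \<omega>) - phi (INF n. F' n \<omega>) = 0"
      by (subst (asm) integral_nonneg_eq_0_iff_AE)
         (use intg[OF FS] intg[OF F'S] le1 phi_mono in auto)
    then show ?thesis
    proof (rule AE_mp, intro AE_I2 impI)
      fix \<omega> assume "phi (INF n. F n \<omega>) - phi (INF n. F' n \<omega>) = 0"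
      then have "\<not> (INF n. F' n \<omega>) < (INF n. F n \<omega>)" using phi_strict by fastforce
      with le1[of \<omega>] have "(INF n. F' n \<omega>) = (INF n. F n \<omega>)" by simp
      with le2[of \<omega>] show "(INF n. F n \<omega>) \<le> s \<omega>" by simp
    qed
  qed
  with FS show ?thesis by blast
qed



lemma dens_finite:
  assumes qi: "integrable M q"
  shows "finite_measure (dens_measure M q)"
proof (rule finite_measureI)
  have qm[measurable]: "q \<in> borel_measurable M" using qi by auto
  have "emeasure (dens_measure M q) (space (dens_measure M q)) = (\<integral>\<^sup>+ x. ennreal (q x) * indicator (space M) x \<partial>M)"
    unfolding dens_measure_def by (simp add: emeasure_density)
  also have "\<dots> \<le> (\<integral>\<^sup>+ x. ennreal (norm (q x)) \<partial>M)"
    by (rule nn_integral_mono) (auto split: split_indicator)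
  also have "\<dots> < \<infinity>" using qi by (simp add: integrable_iff_bounded)
  finally show "emeasure (dens_measure M q) (space (dens_measure M q)) \<noteq> \<infinity>" by simp
qed

lemma feas_char:
  assumes subG: "subalgebra M G"
   and qi: "integrable M q" and q0: "AE \<omega> in M. q \<omega> \<ge> 0"
   and xm[measurable]: "\<xi> \<in> borel_measurable M" "X \<in> borel_measurable M"
   and i1: "integrable M (\<lambda>\<omega>. q \<omega> * \<xi> \<omega>)" and i2: "integrable M (\<lambda>\<omega>. q \<omega> * X \<omega>)"
  shows "(AE \<omega> in dens_measure M q. real_cond_exp (dens_measure M q) G \<xi> \<omega> \<ge> real_cond_exp (dens_measure M q) G X \<omega>)
     \<longleftrightarrow> (\<forall>B\<in>sets G. 0 \<le> (\<integral>\<omega>. q \<omega> * (indicator B \<omega> * (\<xi> \<omega> - X \<omega>)) \<partial>M))"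
proof -
  define Q where "Q = dens_measure M q"
  have qm[measurable]: "q \<in> borel_measurable M" using qi by auto
  have sQ[simp]: "sets Q = sets M" "space Q = space M" unfolding Q_def dens_measure_def by auto
  have Qd: "Q = density M q" unfolding Q_def dens_measure_def by simp
  interpret finite_measure Q unfolding Q_def by (rule dens_finite[OF qi])
  have subQ: "subalgebra Q G" using subG by (simp add: subalgebra_def)
  interpret finite_measure_subalgebra Q G
    by unfold_locales (rule subQ)
  have GM: "sets G \<subseteq> sets M" using subG by (simp add: subalgebra_def)
  have spG: "space G = space M" using subG by (simp add: subalgebra_def)
  have intQ: "integrable Q f \<longleftrightarrow> integrable M (\<lambda>\<omega>. q \<omega> * f \<omega>)" if [measurable]: "f \<in> borel_measurable M" for f
    unfolding Qd by (subst integrable_density) (use q0 in auto)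
  have intgQ: "(\<integral>\<omega>. f \<omega> \<partial>Q) = (\<integral>\<omega>. q \<omega> * f \<omega> \<partial>M)" if [measurable]: "f \<in> borel_measurable M" for f
    unfolding Qd by (subst integral_density) (use q0 in auto)
  define Y where "Y \<omega> = \<xi> \<omega> - X \<omega>" for \<omega>
  have Ym[measurable]: "Y \<in> borel_measurable M" unfolding Y_def by measurable
  have iQxi: "integrable Q \<xi>" using i1 intQ by simp
  have iQX: "integrable Q X" using i2 intQ by simp
  have iQY: "integrable Q Y" unfolding Y_def using iQxi iQX by auto
  define Z where "Z = real_cond_exp Q G Y"
  have ZG[measurable]: "Z \<in> borel_measurable G" unfolding Z_def by simp
  have ZM[measurable]: "Z \<in> borel_measurable M" using measurable_from_subalg[OF subG ZG] .
  have iZ: "integrable Q Z" unfolding Z_def using iQY by auto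
  have diff: "AE \<omega> in Q. Z \<omega> = real_cond_exp Q G \<xi> \<omega> - real_cond_exp Q G X \<omega>"
    unfolding Z_def Y_def using real_cond_exp_diff[OF iQxi iQX] by simp
  have keyB: "(\<integral>\<omega>. q \<omega> * (indicator B \<omega> * (\<xi> \<omega> - X \<omega>)) \<partial>M) = (\<integral>\<omega>. indicator B \<omega> * Z \<omega> \<partial>Q)"
    if B: "B \<in> sets G" for B
  proof -
    have BM[measurable]: "B \<in> sets M" using B GM by auto
    have "(\<integral>\<omega>. q \<omega> * (indicator B \<omega> * (\<xi> \<omega> - X \<omega>)) \<partial>M) = (\<integral>\<omega>. indicator B \<omega> * Y \<omega> \<partial>Q)"
      by (subst intgQ) (auto simp: Y_def)
    also have "\<dots> = (\<integral>\<omega>\<in>B. Y \<omega> \<partial>Q)" by (simp add: set_lebesgue_integral_def)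
    also have "\<dots> = (\<integral>\<omega>\<in>B. Z \<omega> \<partial>Q)" unfolding Z_def by (rule real_cond_exp_intA[OF iQY B])
    also have "\<dots> = (\<integral>\<omega>. indicator B \<omega> * Z \<omega> \<partial>Q)" by (simp add: set_lebesgue_integral_def)
    finally show ?thesis .
  qed
  have "(AE \<omega> in Q. real_cond_exp Q G \<xi> \<omega> \<ge> real_cond_exp Q G X \<omega>) \<longleftrightarrow> (AE \<omega> in Q. Z \<omega> \<ge> 0)"
    using diff by (auto elim!: AE_mp)
  also have "\<dots> \<longleftrightarrow> (\<forall>B\<in>sets G. 0 \<le> (\<integral>\<omega>. indicator B \<omega> * Z \<omega> \<partial>Q))"
  proof
    assume Z0: "AE \<omega> in Q. Z \<omega> \<ge> 0"
    show "\<forall>B\<in>sets G. 0 \<le> (\<integral>\<omega>. indicator B \<omega> * Z \<omega> \<partial>Q)"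
      using Z0 by (auto intro!: integral_nonneg_AE elim!: AE_mp)
  next
    assume H: "\<forall>B\<in>sets G. 0 \<le> (\<integral>\<omega>. indicator B \<omega> * Z \<omega> \<partial>Q)"
    define B where "B = {\<omega> \<in> space M. Z \<omega> < 0}"
    have BG: "B \<in> sets G" 
    proof -
      have "{\<omega> \<in> space G. Z \<omega> < 0} \<in> sets G" by measurable
      then show ?thesis unfolding B_def using spG by simp
    qed
    then have BM[measurable]: "B \<in> sets M" using GM by auto
    have iBZ: "integrable Q (\<lambda>\<omega>. - (indicator B \<omega> * Z \<omega>))"
      using integrable_mult_indicator[OF _ iZ, of B] by simp
    have le0: "(\<integral>\<omega>. - (indicator B \<omega> * Z \<omega>) \<partial>Q) \<le> 0" using H BG by simp
    have ge0: "AE \<omega> in Q. 0 \<le> - (indicator B \<omega> * Z \<omega>)"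
      by (auto simp: B_def split: split_indicator)
    have "(\<integral>\<omega>. - (indicator B \<omega> * Z \<omega>) \<partial>Q) = 0"
      using le0 integral_nonneg_AE[OF ge0] by linarith
    then have "AE \<omega> in Q. - (indicator B \<omega> * Z \<omega>) = 0"
      using integral_nonneg_eq_0_iff_AE[OF iBZ ge0] by simp
    then show "AE \<omega> in Q. Z \<omega> \<ge> 0"
      by (rule AE_mp) (auto simp: B_def split: split_indicator intro!: AE_I2)
  qed
  finally show ?thesis using keyB unfolding Q_def by simp
qed



lemma is_ess_inf_unique:
  assumes "is_ess_inf_fam M S g" "is_ess_inf_fam M S g'"
  shows "AE \<omega> in M. g \<omega> = g' \<omega>"
proof -
  have "AE \<omega> in M. g \<omega> \<le> g' \<omega>" "AE \<omega> in M. g' \<omega> \<le> g \<omega>"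
    using assms unfolding is_ess_inf_fam_def by auto
  then show ?thesis by eventually_elim auto
qed

lemma is_ess_sup_unique:
  assumes "is_ess_sup_fam M S g" "is_ess_sup_fam M S g'"
  shows "AE \<omega> in M. g \<omega> = g' \<omega>"
proof -
  have "AE \<omega> in M. g \<omega> \<le> g' \<omega>" "AE \<omega> in M. g' \<omega> \<le> g \<omega>"
    using assms unfolding is_ess_sup_fam_def by auto
  then show ?thesis by eventually_elim auto
qed

lemma ess_inf_fam_ok:
  assumes "is_ess_inf_fam M S g"
  shows "is_ess_inf_fam M S (ess_inf_fam M S)" "AE \<omega> in M. ess_inf_fam M S \<omega> = g \<omega>"
proof -
  show 1: "is_ess_inf_fam M S (ess_inf_fam M S)"
    unfolding ess_inf_fam_def by (rule someI[where P="is_ess_inf_fam M S", OF assms])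
  show "AE \<omega> in M. ess_inf_fam M S \<omega> = g \<omega>" by (rule is_ess_inf_unique[OF 1 assms])
qed

lemma ess_sup_fam_ok:
  assumes "is_ess_sup_fam M S g"
  shows "is_ess_sup_fam M S (ess_sup_fam M S)" "AE \<omega> in M. ess_sup_fam M S \<omega> = g \<omega>"
proof -
  show 1: "is_ess_sup_fam M S (ess_sup_fam M S)"
    unfolding ess_sup_fam_def by (rule someI[where P="is_ess_sup_fam M S", OF assms])
  show "AE \<omega> in M. ess_sup_fam M S \<omega> = g \<omega>" by (rule is_ess_sup_unique[OF 1 assms])
qed

lemma ess_sup_seq:
  fixes S :: "('a \<Rightarrow> ereal) set"
  assumes P: "prob_space M" and Sm: "S \<subseteq> borel_measurable M" and Sne: "S \<noteq> {}"
  shows "\<exists>f::nat \<Rightarrow> 'a \<Rightarrow> ereal. (\<forall>n. f n \<in> S) \<and> (\<forall>s\<in>S. AE \<omega> in M. s \<omega> \<le> (SUP n. f n \<omega>))"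
proof -
  define S' where "S' = (\<lambda>s \<omega>. - s \<omega>) ` S"
  have "S' \<subseteq> borel_measurable M"
  proof
    fix x assume "x \<in> S'"
    then obtain s where s: "s \<in> S" and x: "x = (\<lambda>\<omega>. - s \<omega>)" unfolding S'_def by blast
    have [measurable]: "s \<in> borel_measurable M" using s Sm by blast
    show "x \<in> borel_measurable M" unfolding x by measurable
  qed
  moreover have "S' \<noteq> {}" unfolding S'_def using Sne by blast
  ultimately have "\<exists>f::nat \<Rightarrow> 'a \<Rightarrow> ereal. (\<forall>n. f n \<in> S') \<and> (\<forall>s\<in>S'. AE \<omega> in M. (INF n. f n \<omega>) \<le> s \<omega>)"
    by (rule ess_inf_seq[OF P])
  then obtain f :: "nat \<Rightarrow> 'a \<Rightarrow> ereal" where f: "\<forall>n. f n \<in> S'" "\<forall>s\<in>S'. AE \<omega> in M. (INF n. f n \<omega>) \<le> s \<omega>"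
    by (elim exE conjE)
  have "\<forall>n. \<exists>s. s \<in> S \<and> f n = (\<lambda>\<omega>. - s \<omega>)" using f(1) unfolding S'_def by blast
  then have "\<exists>g. \<forall>n. g n \<in> S \<and> f n = (\<lambda>\<omega>. - g n \<omega>)" by (rule choice)
  then obtain g where g: "\<And>n. g n \<in> S" "\<And>n. f n = (\<lambda>\<omega>. - g n \<omega>)" by blast
  have "AE \<omega> in M. s \<omega> \<le> (SUP n. g n \<omega>)" if s: "s \<in> S" for s
  proof -
    have sS': "(\<lambda>\<omega>. - s \<omega>) \<in> S'" unfolding S'_def using s by blast
    have "AE \<omega> in M. (INF n. f n \<omega>) \<le> - s \<omega>" using bspec[OF f(2) sS'] by simp
    then have "AE \<omega> in M. (INF n. - g n \<omega>) \<le> - s \<omega>" by (simp only: g(2))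
    then show ?thesis
    proof (rule AE_mp, intro AE_I2 impI)
      fix \<omega> assume "(INF n. - g n \<omega>) \<le> - s \<omega>"
      then have "- (SUP n. g n \<omega>) \<le> - s \<omega>" by (simp only: ereal_INF_uminus_eq)
      then show "s \<omega> \<le> (SUP n. g n \<omega>)" by simp
    qed
  qed
  with g(1) show ?thesis by blast
qed

locale setting =
  fixes M G :: "'a measure" and LF Lstar :: "('a \<Rightarrow> real) set"
    and \<pi>F :: "('a \<Rightarrow> real) \<Rightarrow> ('a \<Rightarrow> real)" and X :: "'a \<Rightarrow> real"
  assumes P: "prob_space M"
    and subG: "subalgebra M G"
    and LFsat: "ae_saturated M M LF" and LFvl: "vector_lattice_fun LF" and LFind: "indicator_closed M LF"
    and piG: "\<forall>Y\<in>LF. \<pi>F Y \<in> borel_measurable G"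
    and Lsi: "Lstar \<subseteq> {Z. integrable M Z}"
    and Lint: "\<forall>Z\<in>Lstar. \<forall>Y\<in>LF. integrable M (\<lambda>\<omega>. Z \<omega> * Y \<omega>)"
    and REG: "\<forall>A\<in>sets G. \<forall>Y\<in>LF. \<forall>Z\<in>LF.
        AE \<omega> in M. \<pi>F (\<lambda>\<omega>'. Y \<omega>' * indicator A \<omega>' + Z \<omega>' * indicator (space M - A) \<omega>') \<omega>
          = \<pi>F Y \<omega> * indicator A \<omega> + \<pi>F Z \<omega> * indicator (space M - A) \<omega>"
    and XLF: "X \<in> LF"
begin

abbreviation K where "K q \<equiv> Kfun M G LF \<pi>F X q"
abbreviation D where "D \<equiv> Lstar \<inter> prob_densities M"

definition fam where
  "fam q = {(\<lambda>\<omega>. ereal (\<pi>F \<xi> \<omega>)) | \<xi>. \<xi> \<in> LF \<and>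
        (AE \<omega> in dens_measure M q.
           real_cond_exp (dens_measure M q) G \<xi> \<omega> \<ge> real_cond_exp (dens_measure M q) G X \<omega>)}"

lemma K_eq: "K q = ess_inf_fam M (fam q)"
  unfolding Kfun_def fam_def by simp

lemma GM: "sets G \<subseteq> sets M" and spG: "space G = space M"
  using subG unfolding subalgebra_def by blast+

lemma LFm: "Y \<in> LF \<Longrightarrow> Y \<in> borel_measurable M"
  using LFsat unfolding ae_saturated_def by blast

lemma piM: "Y \<in> LF \<Longrightarrow> \<pi>F Y \<in> borel_measurable M"
  using piG measurable_from_subalg[OF subG] by blast

lemma feas_iff:
  assumes q: "q \<in> D" and xi: "\<xi> \<in> LF"
  shows "(AE \<omega> in dens_measure M q. real_cond_exp (dens_measure M q) G \<xi> \<omega> \<ge> real_cond_exp (dens_measure M q) G X \<omega>)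
     \<longleftrightarrow> (\<forall>B\<in>sets G. 0 \<le> (\<integral>\<omega>. q \<omega> * (indicator B \<omega> * (\<xi> \<omega> - X \<omega>)) \<partial>M))"
proof -
  have qi: "integrable M q" and q0: "AE \<omega> in M. q \<omega> \<ge> 0" and qL: "q \<in> Lstar"
    using q unfolding prob_densities_def by blast+
  show ?thesis
    by (rule feas_char[OF subG qi q0 LFm[OF xi] LFm[OF XLF]]) (use Lint qL xi XLF in blast)+
qed

lemma fam_G: "fam q \<subseteq> borel_measurable G"
proof
  fix x assume "x \<in> fam q"
  then obtain \<xi> where xi: "\<xi> \<in> LF" and x: "x = (\<lambda>\<omega>. ereal (\<pi>F \<xi> \<omega>))" unfolding fam_def by blast
  have [measurable]: "\<pi>F \<xi> \<in> borel_measurable G" using piG xi by blast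
  show "x \<in> borel_measurable G" unfolding x by measurable
qed

lemma fam_M: "fam q \<subseteq> borel_measurable M"
  using fam_G measurable_from_subalg[OF subG] by blast

lemma X_fam: "(\<lambda>\<omega>. ereal (\<pi>F X \<omega>)) \<in> fam q"
proof -
  have "AE \<omega> in dens_measure M q.
           real_cond_exp (dens_measure M q) G X \<omega> \<ge> real_cond_exp (dens_measure M q) G X \<omega>"
    by (rule AE_I2) simp
  then show ?thesis unfolding fam_def using XLF by blast
qed

lemma K_version:
  "\<exists>k. k \<in> borel_measurable G \<and> is_ess_inf_fam M (fam q) k \<and> is_ess_inf_fam M (fam q) (K q)
      \<and> (AE \<omega> in M. K q \<omega> = k \<omega>)"
proof -
  have "fam q \<noteq> {}" using X_fam by blast
  then have "\<exists>f::nat \<Rightarrow> 'a \<Rightarrow> ereal. (\<forall>n. f n \<in> fam q) \<and> (\<forall>s\<in>fam q. AE \<omega> in M. (INF n. f n \<omega>) \<le> s \<omega>)"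
    by (rule ess_inf_seq[OF P fam_M])
  then obtain f :: "nat \<Rightarrow> 'a \<Rightarrow> ereal" where f: "\<forall>n. f n \<in> fam q" "\<forall>s\<in>fam q. AE \<omega> in M. (INF n. f n \<omega>) \<le> s \<omega>"
    by (elim exE conjE)
  define k where "k \<omega> = (INF n. f n \<omega>)" for \<omega>
  have kG: "k \<in> borel_measurable G" unfolding k_def
    by (rule borel_measurable_INF) (use f fam_G in blast)+
  have kM: "k \<in> borel_measurable M" using measurable_from_subalg[OF subG kG] .
  have ess: "is_ess_inf_fam M (fam q) k"
    unfolding is_ess_inf_fam_def
  proof (intro conjI ballI impI kM)
    show "AE \<omega> in M. k \<omega> \<le> s \<omega>" if "s \<in> fam q" for s using f(2) that unfolding k_def by blast
    fix h assume "h \<in> borel_measurable M" "\<forall>s\<in>fam q. AE \<omega> in M. h \<omega> \<le> s \<omega>"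
    then have "\<forall>n. AE \<omega> in M. h \<omega> \<le> f n \<omega>" using f(1) by blast
    then have "AE \<omega> in M. \<forall>n. h \<omega> \<le> f n \<omega>" by (simp add: AE_all_countable)
    then show "AE \<omega> in M. h \<omega> \<le> k \<omega>" unfolding k_def by (rule AE_mp) (auto intro!: AE_I2 INF_greatest)
  qed
  show ?thesis using ess_inf_fam_ok[OF ess] kG ess unfolding K_eq by blast
qed

lemma K_ess: "is_ess_inf_fam M (fam q) (K q)"
proof -
  from K_version[of q] obtain k where "k \<in> borel_measurable G" "is_ess_inf_fam M (fam q) k"
     "is_ess_inf_fam M (fam q) (K q)" "AE \<omega> in M. K q \<omega> = k \<omega>" by (elim exE conjE)
  then show ?thesis by simp
qed

lemma K_Gver: "\<exists>k. k \<in> borel_measurable G \<and> (AE \<omega> in M. K q \<omega> = k \<omega>)"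
proof -
  from K_version[of q] obtain k where "k \<in> borel_measurable G" "is_ess_inf_fam M (fam q) k"
     "is_ess_inf_fam M (fam q) (K q)" "AE \<omega> in M. K q \<omega> = k \<omega>" by (elim exE conjE)
  then show ?thesis by (intro exI[of _ k] conjI)
qed

lemma K_meas: "K q \<in> borel_measurable M"
  by (rule K_ess[unfolded is_ess_inf_fam_def, THEN conjunct1])

lemma K_le_piX: "AE \<omega> in M. K q \<omega> \<le> ereal (\<pi>F X \<omega>)"
  by (rule bspec[OF K_ess[unfolded is_ess_inf_fam_def, THEN conjunct2, THEN conjunct1] X_fam])

lemma K_local:
  assumes q1: "q1 \<in> D" and q2: "q2 \<in> D" and A: "A \<in> sets G" and c: "c \<ge> 0"
    and eq: "AE \<omega> in M. \<omega> \<in> A \<longrightarrow> q1 \<omega> = c * q2 \<omega>"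
  shows "AE \<omega> in M. \<omega> \<in> A \<longrightarrow> K q1 \<omega> \<le> K q2 \<omega>"
proof -
  have AM[measurable]: "A \<in> sets M" using A GM by blast
  have AcM: "space M - A \<in> sets M" using AM by blast
  have e1: "is_ess_inf_fam M (fam q1) (K q1)" and e2: "is_ess_inf_fam M (fam q2) (K q2)"
    by (rule K_ess)+
  have K1m[measurable]: "K q1 \<in> borel_measurable M" by (rule K_meas)
  define h where "h \<omega> = (if \<omega> \<in> A then K q1 \<omega> else -\<infinity>)" for \<omega>
  have hm: "h \<in> borel_measurable M" unfolding h_def by measurable
  have q1m[measurable]: "q1 \<in> borel_measurable M" and q2m[measurable]: "q2 \<in> borel_measurable M"
    using q1 q2 unfolding prob_densities_def by auto
  have "\<forall>s\<in>fam q2. AE \<omega> in M. h \<omega> \<le> s \<omega>"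
  proof (intro ballI)
    fix s assume s: "s \<in> fam q2"
    obtain \<xi> where xi: "\<xi> \<in> LF" and seq: "s = (\<lambda>\<omega>. ereal (\<pi>F \<xi> \<omega>))"
      and fz: "AE \<omega> in dens_measure M q2.
           real_cond_exp (dens_measure M q2) G \<xi> \<omega> \<ge> real_cond_exp (dens_measure M q2) G X \<omega>"
      using s unfolding fam_def by blast
    have xim[measurable]: "\<xi> \<in> borel_measurable M" "X \<in> borel_measurable M" using xi XLF LFm by blast+
    define \<xi>' where "\<xi>' = (\<lambda>\<omega>'. \<xi> \<omega>' * indicator A \<omega>' + X \<omega>' * indicator (space M - A) \<omega>')"
    have xi'm[measurable]: "\<xi>' \<in> borel_measurable M" unfolding \<xi>'_def by measurable
    have i1: "(\<lambda>\<omega>. indicator A \<omega> * \<xi> \<omega>) \<in> LF" using LFind xi AM unfolding indicator_closed_def by blast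
    have i2: "(\<lambda>\<omega>. indicator (space M - A) \<omega> * X \<omega>) \<in> LF" using LFind XLF AcM unfolding indicator_closed_def by blast
    have "(\<lambda>\<omega>. (\<lambda>\<omega>. indicator A \<omega> * \<xi> \<omega>) \<omega> + (\<lambda>\<omega>. indicator (space M - A) \<omega> * X \<omega>) \<omega>) \<in> LF"
    proof -
      have addc: "\<forall>X\<in>LF. \<forall>Y\<in>LF. (\<lambda>\<omega>. X \<omega> + Y \<omega>) \<in> LF"
        using LFvl unfolding vector_lattice_fun_def by (elim conjE)
      show ?thesis using bspec[OF bspec[OF addc i1] i2] by simp
    qed
    moreover have "(\<lambda>\<omega>. (\<lambda>\<omega>. indicator A \<omega> * \<xi> \<omega>) \<omega> + (\<lambda>\<omega>. indicator (space M - A) \<omega> * X \<omega>) \<omega>) = \<xi>'"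
      unfolding \<xi>'_def by (simp add: mult.commute)
    ultimately have xi'LF: "\<xi>' \<in> LF" by simp
    have f2: "\<forall>B\<in>sets G. 0 \<le> (\<integral>\<omega>. q2 \<omega> * (indicator B \<omega> * (\<xi> \<omega> - X \<omega>)) \<partial>M)"
      using fz feas_iff[OF q2 xi] by simp
    have "\<forall>B\<in>sets G. 0 \<le> (\<integral>\<omega>. q1 \<omega> * (indicator B \<omega> * (\<xi>' \<omega> - X \<omega>)) \<partial>M)"
    proof
      fix B assume B: "B \<in> sets G"
      then have BM[measurable]: "B \<in> sets M" using GM by blast
      have BA: "B \<inter> A \<in> sets G" using A B by blast
      have pw: "q1 \<omega> * (indicator B \<omega> * (\<xi>' \<omega> - X \<omega>)) =
                c * (q2 \<omega> * (indicator (B \<inter> A) \<omega> * (\<xi> \<omega> - X \<omega>)))"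
        if "\<omega> \<in> space M" "\<omega> \<in> A \<longrightarrow> q1 \<omega> = c * q2 \<omega>" for \<omega>
      proof (cases "\<omega> \<in> A")
        case True
        then show ?thesis using that by (simp add: \<xi>'_def indicator_def)
      next
        case False
        then show ?thesis using that by (simp add: \<xi>'_def indicator_def)
      qed
      have "(\<integral>\<omega>. q1 \<omega> * (indicator B \<omega> * (\<xi>' \<omega> - X \<omega>)) \<partial>M)
          = (\<integral>\<omega>. c * (q2 \<omega> * (indicator (B \<inter> A) \<omega> * (\<xi> \<omega> - X \<omega>))) \<partial>M)"
      proof (rule integral_cong_AE)
        show "AE \<omega> in M. q1 \<omega> * (indicator B \<omega> * (\<xi>' \<omega> - X \<omega>)) =
                c * (q2 \<omega> * (indicator (B \<inter> A) \<omega> * (\<xi> \<omega> - X \<omega>)))"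
          using eq by (rule AE_mp) (rule AE_I2, rule impI, rule pw)
      qed measurable
      also have "\<dots> = c * (\<integral>\<omega>. q2 \<omega> * (indicator (B \<inter> A) \<omega> * (\<xi> \<omega> - X \<omega>)) \<partial>M)"
        by (rule integral_mult_right_zero)
      also have "\<dots> \<ge> 0" using f2 BA c by simp
      finally show "0 \<le> (\<integral>\<omega>. q1 \<omega> * (indicator B \<omega> * (\<xi>' \<omega> - X \<omega>)) \<partial>M)" .
    qed
    then have "AE \<omega> in dens_measure M q1.
           real_cond_exp (dens_measure M q1) G \<xi>' \<omega> \<ge> real_cond_exp (dens_measure M q1) G X \<omega>"
      using feas_iff[OF q1 xi'LF] by blast
    then have "(\<lambda>\<omega>. ereal (\<pi>F \<xi>' \<omega>)) \<in> fam q1"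
      using xi'LF unfolding fam_def by blast
    then have le1: "AE \<omega> in M. K q1 \<omega> \<le> ereal (\<pi>F \<xi>' \<omega>)" by (rule bspec[OF e1[unfolded is_ess_inf_fam_def, THEN conjunct2, THEN conjunct1]])
    have reg: "AE \<omega> in M. \<pi>F \<xi>' \<omega> = \<pi>F \<xi> \<omega> * indicator A \<omega> + \<pi>F X \<omega> * indicator (space M - A) \<omega>"
      using REG A xi XLF unfolding \<xi>'_def by blast
    show "AE \<omega> in M. h \<omega> \<le> s \<omega>" using le1 reg
    proof (rule AE_mp[OF AE_conjI], intro AE_I2 impI)
      fix \<omega> assume \<omega>: "\<omega> \<in> space M"
        and H: "K q1 \<omega> \<le> ereal (\<pi>F \<xi>' \<omega>) \<and>
          \<pi>F \<xi>' \<omega> = \<pi>F \<xi> \<omega> * indicator A \<omega> + \<pi>F X \<omega> * indicator (space M - A) \<omega>"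
      show "h \<omega> \<le> s \<omega>"
      proof (cases "\<omega> \<in> A")
        case True
        note a = H[THEN conjunct1] and b = H[THEN conjunct2]
        have e3: "\<pi>F \<xi>' \<omega> = \<pi>F \<xi> \<omega>" using b True by (simp add: indicator_def)
        have h1: "h \<omega> = K q1 \<omega>" unfolding h_def using True by (rule if_P)
        have h2: "s \<omega> = ereal (\<pi>F \<xi> \<omega>)" unfolding seq by (rule refl)
        have "K q1 \<omega> \<le> ereal (\<pi>F \<xi> \<omega>)" using a unfolding e3 .
        then show ?thesis unfolding h1 h2 .
      next
        case False
        then show ?thesis by (simp add: h_def)
      qed
    qed
  qed
  then have "AE \<omega> in M. h \<omega> \<le> K q2 \<omega>"
    by (rule mp[OF bspec[OF e2[unfolded is_ess_inf_fam_def, THEN conjunct2, THEN conjunct2] hm]])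
  then show ?thesis by (rule AE_mp) (rule AE_I2, simp add: h_def)
qed
end



theorem proposition22:
  fixes M G :: "'a measure"
    and LF LG Lstar :: "('a \<Rightarrow> real) set"
    and \<pi>F :: "('a \<Rightarrow> real) \<Rightarrow> ('a \<Rightarrow> real)"
    and X :: "'a \<Rightarrow> real"
  assumes P: "prob_space M"
    and subG: "subalgebra M G"
    and LF: "ae_saturated M M LF" "vector_lattice_fun LF" "indicator_closed M LF"
    and LG: "ae_saturated M G LG" "vector_lattice_fun LG" "indicator_closed G LG"
    and Lstar: "Lstar \<subseteq> {Z. integrable M Z}" "ae_saturated M M Lstar"
      "vector_lattice_fun Lstar" "indicator_closed M Lstar"
      "\<forall>Z\<in>Lstar. \<forall>Y\<in>LF. integrable M (\<lambda>\<omega>. Z \<omega> * Y \<omega>)"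
    and pi_maps: "\<forall>Y\<in>LF. \<pi>F Y \<in> LG"
    and pi_wd: "\<forall>Y\<in>LF. \<forall>Z\<in>LF. (AE \<omega> in M. Y \<omega> = Z \<omega>) \<longrightarrow> (AE \<omega> in M. \<pi>F Y \<omega> = \<pi>F Z \<omega>)"
    and REG: "\<forall>A\<in>sets G. \<forall>Y\<in>LF. \<forall>Z\<in>LF.
        AE \<omega> in M. \<pi>F (\<lambda>\<omega>'. Y \<omega>' * indicator A \<omega>' + Z \<omega>' * indicator (space M - A) \<omega>') \<omega>
          = \<pi>F Y \<omega> * indicator A \<omega> + \<pi>F Z \<omega> * indicator (space M - A) \<omega>"
    and banach: "\<exists>N. banach_lattice_in_L1 M Lstar N"
    and disj: "\<forall>\<eta>::nat \<Rightarrow> 'a \<Rightarrow> real.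
        (\<forall>n. \<eta> n \<in> Lstar \<and> (AE \<omega> in M. \<eta> n \<omega> \<ge> 0)) \<and>
        (\<forall>n m. n \<noteq> m \<longrightarrow> (AE \<omega> in M. \<eta> n \<omega> * \<eta> m \<omega> = 0))
        \<longrightarrow> (\<exists>\<alpha>::nat \<Rightarrow> real. (\<forall>n. \<alpha> n > 0) \<and>
               (\<exists>Z\<in>Lstar. (AE \<omega> in M. Z \<omega> \<ge> 0) \<and> (AE \<omega> in M. Z \<omega> = (\<Sum>n. \<alpha> n * \<eta> n \<omega>))))"
    and X: "X \<in> LF"
    and Hfin: "AE \<omega> in M. Hfun M G LF Lstar \<pi>F X \<omega> > -\<infinity>"
  shows "\<forall>\<epsilon>>0. \<exists>q \<in> Lstar \<inter> prob_densities M.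
           AE \<omega> in M. Hfun M G LF Lstar \<pi>F X \<omega> - Kfun M G LF \<pi>F X q \<omega> < ereal \<epsilon>"
proof -
  have LGm: "\<forall>Y\<in>LF. \<pi>F Y \<in> borel_measurable G" using pi_maps LG(1) unfolding ae_saturated_def by blast
  interpret setting M G LF Lstar \<pi>F X
    by (rule setting.intro[OF P subG LF(1) LF(2) LF(3) LGm Lstar(1) Lstar(5) REG X])
  show ?thesis
  proof (intro allI impI)
    fix \<epsilon> :: real assume \<epsilon>: "\<epsilon> > 0"
    define T where "T = {Kfun M G LF \<pi>F X q | q. q \<in> Lstar \<inter> prob_densities M}"
    have H_eq: "Hfun M G LF Lstar \<pi>F X = ess_sup_fam M T" unfolding Hfun_def T_def by simp
    have Dne: "D \<noteq> {}"
    proof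
      assume "D = {}"
      then have T0: "T = {}" unfolding T_def by auto
      have "is_ess_sup_fam M T (\<lambda>_. -\<infinity>)" unfolding T0 is_ess_sup_fam_def by simp
      from ess_sup_fam_ok(2)[OF this] Hfin have "AE \<omega> in M. False" unfolding H_eq
        by eventually_elim simp
      then show False using prob_space.AE_False[OF P] by simp
    qed
    have Tm: "T \<subseteq> borel_measurable M" unfolding T_def using K_meas by blast
    have Tne: "T \<noteq> {}" using Dne unfolding T_def by blast
    have "\<exists>f::nat \<Rightarrow> 'a \<Rightarrow> ereal. (\<forall>n. f n \<in> T) \<and> (\<forall>s\<in>T. AE \<omega> in M. s \<omega> \<le> (SUP n. f n \<omega>))"
      by (rule ess_sup_seq[OF P Tm Tne])
    then obtain f :: "nat \<Rightarrow> 'a \<Rightarrow> ereal" where f: "\<forall>n. f n \<in> T" "\<forall>s\<in>T. AE \<omega> in M. s \<omega> \<le> (SUP n. f n \<omega>)"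
      by (elim exE conjE)
    have "\<forall>n. \<exists>q\<in>D. f n = K q" using f(1) unfolding T_def by blast
    then have "\<exists>qs. \<forall>n. qs n \<in> D \<and> f n = K (qs n)" by (intro choice) blast
    then obtain qs where qs: "\<And>n. qs n \<in> D" "\<And>n. f n = K (qs n)" by blast
    have ess: "is_ess_sup_fam M T (\<lambda>\<omega>. SUP n. f n \<omega>)"
      unfolding is_ess_sup_fam_def
    proof (intro conjI ballI impI)
      show "(\<lambda>\<omega>. SUP n. f n \<omega>) \<in> borel_measurable M" using f(1) Tm by (intro borel_measurable_SUP) blast+
      show "AE \<omega> in M. s \<omega> \<le> (SUP n. f n \<omega>)" if "s \<in> T" for s using f(2) that by blast
      fix h assume "h \<in> borel_measurable M" "\<forall>s\<in>T. AE \<omega> in M. s \<omega> \<le> h \<omega>"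
      then have "\<forall>n. AE \<omega> in M. f n \<omega> \<le> h \<omega>" using f(1) by blast
      then have "AE \<omega> in M. \<forall>n. f n \<omega> \<le> h \<omega>" by (simp add: AE_all_countable)
      then show "AE \<omega> in M. (SUP n. f n \<omega>) \<le> h \<omega>" by (rule AE_mp) (auto intro!: AE_I2 SUP_least)
    qed
    have HS: "AE \<omega> in M. Hfun M G LF Lstar \<pi>F X \<omega> = (SUP n. f n \<omega>)"
      unfolding H_eq by (rule ess_sup_fam_ok(2)[OF ess])
    have "\<forall>n. \<exists>k. k \<in> borel_measurable G \<and> (AE \<omega> in M. K (qs n) \<omega> = k \<omega>)" by (intro allI K_Gver)
    from choice[OF this] obtain g where gG: "\<And>n. g n \<in> borel_measurable G" and gK: "\<And>n. AE \<omega> in M. K (qs n) \<omega> = g n \<omega>"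
      by blast
    define Hg where "Hg \<omega> = (SUP n. g n \<omega>)" for \<omega>
    have gG'[measurable]: "g n \<in> borel_measurable G" for n by (rule gG)
    have HgG[measurable]: "Hg \<in> borel_measurable G" unfolding Hg_def by (rule borel_measurable_SUP) (use gG in blast)+
    define A where "A n = {\<omega> \<in> space M. Hg \<omega> - ereal \<epsilon> < g n \<omega>}" for n
    have AG: "A n \<in> sets G" for n
    proof -
      have "{\<omega> \<in> space G. Hg \<omega> - ereal \<epsilon> < g n \<omega>} \<in> sets G" by measurable
      then show ?thesis unfolding A_def using spG by simp
    qed
    define B where "B n = A n - (\<Union>k<n. A k)" for n
    have BG: "B n \<in> sets G" for n unfolding B_def using AG by (intro sets.Diff sets.finite_UN) auto
    have BM[measurable]: "B n \<in> sets M" for n using BG GM by blast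
    have Bdisj: "B n \<inter> B m = {}" if "n \<noteq> m" for n m
      using that by (cases n m rule: linorder_cases) (auto simp: B_def)
    define \<eta> where "\<eta> n = (\<lambda>\<omega>. indicator (B n) \<omega> * qs n \<omega>)" for n
    have \<eta>L: "\<eta> n \<in> Lstar" for n
    proof -
      have "qs n \<in> Lstar" using qs(1) by blast
      then show ?thesis using Lstar(4) BM unfolding indicator_closed_def \<eta>_def by blast
    qed
    have \<eta>0: "AE \<omega> in M. \<eta> n \<omega> \<ge> 0" for n
    proof -
      have "AE \<omega> in M. qs n \<omega> \<ge> 0" using qs(1)[of n] unfolding prob_densities_def by blast
      then show ?thesis by (rule AE_mp) (auto intro!: AE_I2 simp: \<eta>_def)
    qed
    have \<eta>d: "AE \<omega> in M. \<eta> n \<omega> * \<eta> m \<omega> = 0" if "n \<noteq> m" for n m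
      using Bdisj[OF that] by (auto intro!: AE_I2 simp: \<eta>_def split: split_indicator)
    have "\<exists>\<alpha>::nat \<Rightarrow> real. (\<forall>n. \<alpha> n > 0) \<and>
               (\<exists>Z\<in>Lstar. (AE \<omega> in M. Z \<omega> \<ge> 0) \<and> (AE \<omega> in M. Z \<omega> = (\<Sum>n. \<alpha> n * \<eta> n \<omega>)))"
    proof -
      have "(\<forall>n. \<eta> n \<in> Lstar \<and> (AE \<omega> in M. \<eta> n \<omega> \<ge> 0)) \<and>
        (\<forall>n m. n \<noteq> m \<longrightarrow> (AE \<omega> in M. \<eta> n \<omega> * \<eta> m \<omega> = 0))"
        using \<eta>L \<eta>0 \<eta>d by blast
      from disj[rule_format, OF this] show ?thesis .
    qed
    then obtain \<alpha> Z where \<alpha>: "\<And>n. \<alpha> n > 0" and ZL: "Z \<in> Lstar" and Z0: "AE \<omega> in M. Z \<omega> \<ge> 0"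
      and Zs: "AE \<omega> in M. Z \<omega> = (\<Sum>n. \<alpha> n * \<eta> n \<omega>)" by blast
    have Zsingle: "AE \<omega> in M. \<forall>n. \<omega> \<in> B n \<longrightarrow> Z \<omega> = \<alpha> n * qs n \<omega>"
      using Zs
    proof eventually_elim
      case (elim \<omega>)
      show ?case
      proof (intro allI impI)
        fix n assume \<omega>: "\<omega> \<in> B n"
        have eq: "(\<lambda>k. \<alpha> k * \<eta> k \<omega>) = (\<lambda>k. if k = n then \<alpha> k * \<eta> k \<omega> else 0)"
        proof
          fix k show "\<alpha> k * \<eta> k \<omega> = (if k = n then \<alpha> k * \<eta> k \<omega> else 0)"
            using Bdisj[of k n] \<omega> by (cases "k = n") (auto simp: \<eta>_def indicator_def)
        qed
        have "(\<lambda>k. \<alpha> k * \<eta> k \<omega>) sums (\<alpha> n * \<eta> n \<omega>)" unfolding eq by (rule sums_single)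
        then show "Z \<omega> = \<alpha> n * qs n \<omega>" using elim \<omega> by (simp add: sums_unique[symmetric] \<eta>_def)
      qed
    qed
    have Zint: "integrable M Z" using ZL Lstar(1) by blast
    have "\<exists>q\<in>D. \<forall>n. \<exists>c\<ge>0. AE \<omega> in M. \<omega> \<in> B n \<longrightarrow> qs n \<omega> = c * q \<omega>"
    proof (cases "(\<integral>\<omega>. Z \<omega> \<partial>M) > 0")
      case True
      define z where "z = (\<integral>\<omega>. Z \<omega> \<partial>M)"
      have z: "z > 0" using True z_def by simp
      define q where "q = (\<lambda>\<omega>. (1/z) * Z \<omega>)"
      have "q \<in> Lstar" using Lstar(3) ZL unfolding vector_lattice_fun_def q_def by blast
      moreover have "q \<in> prob_densities M"
      proof -
        have "integrable M q" unfolding q_def using Zint by (rule integrable_mult_right)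
        moreover have "AE \<omega> in M. q \<omega> \<ge> 0" using Z0 by (rule AE_mp) (use z in \<open>auto intro!: AE_I2 simp: q_def\<close>)
        moreover have "(\<integral>\<omega>. q \<omega> \<partial>M) = 1" unfolding q_def using z by (simp add: z_def[symmetric])
        ultimately show ?thesis unfolding prob_densities_def by simp
      qed
      moreover have "\<forall>n. \<exists>c\<ge>0. AE \<omega> in M. \<omega> \<in> B n \<longrightarrow> qs n \<omega> = c * q \<omega>"
      proof
        fix n
        have "AE \<omega> in M. \<omega> \<in> B n \<longrightarrow> qs n \<omega> = (z / \<alpha> n) * q \<omega>"
          using Zsingle by (rule AE_mp) (use z \<alpha>[of n] in \<open>auto intro!: AE_I2 simp: q_def\<close>)
        moreover have "z / \<alpha> n \<ge> 0" using z \<alpha>[of n] by simp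
        ultimately show "\<exists>c\<ge>0. AE \<omega> in M. \<omega> \<in> B n \<longrightarrow> qs n \<omega> = c * q \<omega>" by blast
      qed
      ultimately show ?thesis by blast
    next
      case False
      then have "(\<integral>\<omega>. Z \<omega> \<partial>M) = 0" using integral_nonneg_AE[OF Z0] by linarith
      then have Z00: "AE \<omega> in M. Z \<omega> = 0" using integral_nonneg_eq_0_iff_AE[OF Zint Z0] by simp
      obtain q0 where q0: "q0 \<in> D" using Dne by auto
      have "\<forall>n. \<exists>c\<ge>0. AE \<omega> in M. \<omega> \<in> B n \<longrightarrow> qs n \<omega> = c * q0 \<omega>"
      proof
        fix n
        have "AE \<omega> in M. \<omega> \<in> B n \<longrightarrow> qs n \<omega> = 0 * q0 \<omega>"
          using Zsingle Z00 by eventually_elim (use \<alpha>[of n] in auto)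
        then show "\<exists>c\<ge>0. AE \<omega> in M. \<omega> \<in> B n \<longrightarrow> qs n \<omega> = c * q0 \<omega>" by blast
      qed
      then show ?thesis using q0 by blast
    qed
    then obtain q where q: "q \<in> D" and qc: "\<forall>n. \<exists>c\<ge>0. AE \<omega> in M. \<omega> \<in> B n \<longrightarrow> qs n \<omega> = c * q \<omega>"
      by blast
    from choice[OF qc] obtain c where c: "\<And>n. c n \<ge> 0" "\<And>n. AE \<omega> in M. \<omega> \<in> B n \<longrightarrow> qs n \<omega> = c n * q \<omega>"
      by blast
    have Kl: "AE \<omega> in M. \<forall>n. \<omega> \<in> B n \<longrightarrow> K (qs n) \<omega> \<le> K q \<omega>"
      unfolding AE_all_countable using K_local[OF qs(1) q BG c(1) c(2)] by blast
    have gK': "AE \<omega> in M. \<forall>n. K (qs n) \<omega> = g n \<omega>" unfolding AE_all_countable using gK by blast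
    have piX: "AE \<omega> in M. \<forall>n. K (qs n) \<omega> \<le> ereal (\<pi>F X \<omega>)" unfolding AE_all_countable using K_le_piX by blast
    show "\<exists>q\<in>Lstar \<inter> prob_densities M. AE \<omega> in M. Hfun M G LF Lstar \<pi>F X \<omega> - Kfun M G LF \<pi>F X q \<omega> < ereal \<epsilon>"
    proof (rule bexI[OF _ q])
      show "AE \<omega> in M. Hfun M G LF Lstar \<pi>F X \<omega> - Kfun M G LF \<pi>F X q \<omega> < ereal \<epsilon>"
        using HS Hfin Kl gK' piX AE_space
      proof eventually_elim
        case (elim \<omega>)
        have Heq: "Hfun M G LF Lstar \<pi>F X \<omega> = Hg \<omega>" using elim(1,4) by (simp add: Hg_def qs(2))
        have hb: "Hg \<omega> \<le> ereal (\<pi>F X \<omega>)" unfolding Hg_def using elim(4,5) by (auto intro!: SUP_least)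
        have hl: "-\<infinity> < Hg \<omega>" using elim(2) Heq by simp
        obtain r where r: "Hg \<omega> = ereal r" using hb hl by (cases "Hg \<omega>") auto
        have "Hg \<omega> - ereal \<epsilon> < (SUP n. g n \<omega>)" using r \<epsilon> by (simp add: Hg_def[symmetric])
        then obtain n where "Hg \<omega> - ereal \<epsilon> < g n \<omega>" by (auto simp: less_SUP_iff)
        then have ex: "\<omega> \<in> A n" using elim(6) by (simp add: A_def)
        define m where "m = (LEAST n. \<omega> \<in> A n)"
        have Am: "\<omega> \<in> A m" unfolding m_def using ex by (rule LeastI)
        have "\<omega> \<notin> A k" if "k < m" for k using not_less_Least[OF that[unfolded m_def]] .
        then have Bm: "\<omega> \<in> B m" using Am by (auto simp: B_def)
        have "Hg \<omega> - ereal \<epsilon> < g m \<omega>" using Am by (simp add: A_def)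
        also have "\<dots> = K (qs m) \<omega>" using elim(4) by simp
        also have "\<dots> \<le> K q \<omega>" using elim(3) Bm by simp
        finally have "ereal r - ereal \<epsilon> < K q \<omega>" using r by simp
        then have "ereal r - K q \<omega> < ereal \<epsilon>" by (cases "K q \<omega>") auto
        then show ?case using Heq r by simp
      qed
    qed
  qed
qed


end
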